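(* In the Core Tuplix Calculus $\mathbf{CTC}$ over a nonempty attribute set $A$ and a non-trivial cancellation meadow $\mathcal{D}$ (defined in the context), the following two rules are derivable: (i) for all data terms $p,q$, every data variable $u$ and every tuplix term $t$, if $\mathcal{D}\models p=q$ then $\mathbf{CTC}\vdash t[p/u]=t[q/u]$; (ii) for every tuplix term $t$, data variable $u$ and data term $p$, $\mathbf{CTC}\vdash t\oplus\gamma(u-p)=t[p/u]\oplus\gamma(u-p)$. Here $t[p/u]$ denotes replacement of all occurrences of the data variable $u$ in $t$ by $p$.
   Context: Data: a meadow is a commutative ring with unit with a total unary operation $(\cdot)^{-1}$ satisfying $(u^{-1})^{-1}=u$ and $u\cdot(u\cdot u^{-1})=u$; a non-trivial cancellation meadow additionally satisfies $0\neq 1$ and the cancellation law ($u\neq 0$ and $uv=uw$ imply $v=w$). Fix such a structure $\mathcal{D}$. Data terms are built from data variables, constants $0,1$, binary $+,\cdot$ and unary $-$, $(\cdot)^{-1}$; write $p/q$ for $p\cdot q^{-1}$ and $p-q$ for $p+(-q)$; $\mathcal{D}\models p=q$ means the identity holds for all valuations in $\mathcal{D}$. Fix a nonempty set $A$ of attributes. Tuplix terms are built from tuplix variables, constants $\epsilon$ and $\delta$, entries $a(p)$ ($a\in A$, $p$ a data term), zero tests $\gamma(p)$, and the binary operator $\oplus$. $\mathbf{CTC}$ is the two-sorted equational proof system with axioms (T1) $x\oplus y=y\oplus x$; (T2) $(x\oplus y)\oplus z=x\oplus(y\oplus z)$; (T3) $x\oplus\epsilon=x$; (T4) $x\oplus\delta=\delta$;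 (T5) $a(u)\oplus a(v)=a(u+v)$; (T6) $\gamma(u)=\gamma(u/u)$; (T7) $\gamma(0)=\epsilon$; (T8) $\gamma(1)=\delta$; (T9) $\gamma(u)\oplus\gamma(v)=\gamma(u/u+v/v)$; (T10) $\gamma(u-v)\oplus a(u)=\gamma(u-v)\oplus a(v)$ (for all $a\in A$), together with the rule (DE): for all data terms $p,q$, if $\mathcal{D}\models p=q$ then $\gamma(p)=\gamma(q)$ is derivable. *)

theory Defs
  imports Main
begin

record 'd meadow_ops =
  mzero :: 'd
  mone  :: 'd
  madd  :: "'d \<Rightarrow> 'd \<Rightarrow> 'd"
  mmul  :: "'d \<Rightarrow> 'd \<Rightarrow> 'd"
  mneg  :: "'d \<Rightarrow> 'd"
  minv  :: "'d \<Rightarrow> 'd"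

definition meadow :: "'d meadow_ops \<Rightarrow> bool" where
  "meadow M \<longleftrightarrow>
     (\<forall>x y z. madd M (madd M x y) z = madd M x (madd M y z)) \<and>
     (\<forall>x y. madd M x y = madd M y x) \<and>
     (\<forall>x. madd M x (mzero M) = x) \<and>
     (\<forall>x. madd M x (mneg M x) = mzero M) \<and>
     (\<forall>x y z. mmul M (mmul M x y) z = mmul M x (mmul M y z)) \<and>
     (\<forall>x y. mmul M x y = mmul M y x) \<and>
     (\<forall>x. mmul M x (mone M) = x) \<and>
     (\<forall>x y z. mmul M x (madd M y z) = madd M (mmul M x y) (mmul M x z)) \<and>
     (\<forall>x. minv M (minv M x) = x) \<and>
     (\<forall>x. mmul M x (mmul M x (minv M x)) = x)"

definition nt_cancellation_meadow :: "'d meadow_ops \<Rightarrow> bool" where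
  "nt_cancellation_meadow M \<longleftrightarrow>
     meadow M \<and> mzero M \<noteq> mone M \<and>
     (\<forall>x y z. x \<noteq> mzero M \<longrightarrow> mmul M x y = mmul M x z \<longrightarrow> y = z)"

datatype dterm =
    DVar nat
  | DZero
  | DOne
  | DAdd dterm dterm
  | DMul dterm dterm
  | DNeg dterm
  | DInv dterm

definition DDiv :: "dterm \<Rightarrow> dterm \<Rightarrow> dterm" where
  "DDiv p q = DMul p (DInv q)"

definition DSub :: "dterm \<Rightarrow> dterm \<Rightarrow> dterm" where
  "DSub p q = DAdd p (DNeg q)"

fun deval :: "'d meadow_ops \<Rightarrow> (nat \<Rightarrow> 'd) \<Rightarrow> dterm \<Rightarrow> 'd" where
  "deval M \<rho> (DVar n) = \<rho> n"
| "deval M \<rho> DZero = mzero M"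
| "deval M \<rho> DOne = mone M"
| "deval M \<rho> (DAdd p q) = madd M (deval M \<rho> p) (deval M \<rho> q)"
| "deval M \<rho> (DMul p q) = mmul M (deval M \<rho> p) (deval M \<rho> q)"
| "deval M \<rho> (DNeg p) = mneg M (deval M \<rho> p)"
| "deval M \<rho> (DInv p) = minv M (deval M \<rho> p)"

definition dvalid :: "'d meadow_ops \<Rightarrow> dterm \<Rightarrow> dterm \<Rightarrow> bool" where
  "dvalid M p q \<longleftrightarrow> (\<forall>\<rho>. deval M \<rho> p = deval M \<rho> q)"

fun dsubst :: "nat \<Rightarrow> dterm \<Rightarrow> dterm \<Rightarrow> dterm" where
  "dsubst u p (DVar n) = (if n = u then p else DVar n)"
| "dsubst u p DZero = DZero"
| "dsubst u p DOne = DOne"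
| "dsubst u p (DAdd a b) = DAdd (dsubst u p a) (dsubst u p b)"
| "dsubst u p (DMul a b) = DMul (dsubst u p a) (dsubst u p b)"
| "dsubst u p (DNeg a) = DNeg (dsubst u p a)"
| "dsubst u p (DInv a) = DInv (dsubst u p a)"

datatype 'a tterm =
    TVar nat
  | Eps
  | Delta
  | Ent 'a dterm
  | Gam dterm
  | Oplus "'a tterm" "'a tterm"

fun tsubst :: "nat \<Rightarrow> dterm \<Rightarrow> 'a tterm \<Rightarrow> 'a tterm" where
  "tsubst u p (TVar n) = TVar n"
| "tsubst u p Eps = Eps"
| "tsubst u p Delta = Delta"
| "tsubst u p (Ent a q) = Ent a (dsubst u p q)"
| "tsubst u p (Gam q) = Gam (dsubst u p q)"
| "tsubst u p (Oplus s t) = Oplus (tsubst u p s) (tsubst u p t)"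

text \<open>Derivable tuplix equations: all substitution instances of the axioms
  T1--T10, the rule DE, and the rules of equational logic (reflexivity, symmetry,
  transitivity, congruence w.r.t. the only tuplix-sorted operator \<open>\<oplus>\<close>).\<close>
inductive ctc :: "'d meadow_ops \<Rightarrow> 'a tterm \<Rightarrow> 'a tterm \<Rightarrow> bool" for M where
  T1: "ctc M (Oplus x y) (Oplus y x)"
| T2: "ctc M (Oplus (Oplus x y) z) (Oplus x (Oplus y z))"
| T3: "ctc M (Oplus x Eps) x"
| T4: "ctc M (Oplus x Delta) Delta"
| T5: "ctc M (Oplus (Ent a u) (Ent a v)) (Ent a (DAdd u v))"
| T6: "ctc M (Gam u) (Gam (DDiv u u))"
| T7: "ctc M (Gam DZero) Eps"
| T8: "ctc M (Gam DOne) Delta"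
| T9: "ctc M (Oplus (Gam u) (Gam v)) (Gam (DAdd (DDiv u u) (DDiv v v)))"
| T10: "ctc M (Oplus (Gam (DSub u v)) (Ent a u)) (Oplus (Gam (DSub u v)) (Ent a v))"
| DE: "dvalid M p q \<Longrightarrow> ctc M (Gam p) (Gam q)"
| refl: "ctc M t t"
| sym: "ctc M s t \<Longrightarrow> ctc M t s"
| trans: "ctc M s t \<Longrightarrow> ctc M t r \<Longrightarrow> ctc M s r"
| cong: "ctc M s s' \<Longrightarrow> ctc M t t' \<Longrightarrow> ctc M (Oplus s t) (Oplus s' t')"

end

theory Submission
  imports Defs
begin

declare ctc.trans[trans]

locale ncm = fixes M :: "'d meadow_ops" assumes ncm: "nt_cancellation_meadow M"
begin

lemma add_assoc: "madd M (madd M x y) z = madd M x (madd M y z)"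
  using ncm unfolding nt_cancellation_meadow_def meadow_def by metis
lemma add_comm: "madd M x y = madd M y x"
  using ncm unfolding nt_cancellation_meadow_def meadow_def by metis
lemma add_zero: "madd M x (mzero M) = x"
  using ncm unfolding nt_cancellation_meadow_def meadow_def by metis
lemma add_neg: "madd M x (mneg M x) = mzero M"
  using ncm unfolding nt_cancellation_meadow_def meadow_def by metis
lemma mul_comm: "mmul M x y = mmul M y x"
  using ncm unfolding nt_cancellation_meadow_def meadow_def by metis
lemma mul_one: "mmul M x (mone M) = x"
  using ncm unfolding nt_cancellation_meadow_def meadow_def by metis
lemma distrib: "mmul M x (madd M y z) = madd M (mmul M x y) (mmul M x z)"
  using ncm unfolding nt_cancellation_meadow_def meadow_def by metis
lemma mul_inv: "mmul M x (mmul M x (minv M x)) = x"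
  using ncm unfolding nt_cancellation_meadow_def meadow_def by metis
lemma zero_ne_one: "mzero M \<noteq> mone M"
  using ncm unfolding nt_cancellation_meadow_def by blast
lemma cancel: "x \<noteq> mzero M \<Longrightarrow> mmul M x y = mmul M x z \<Longrightarrow> y = z"
  using ncm unfolding nt_cancellation_meadow_def by blast

lemma mul_zero: "mmul M a (mzero M) = mzero M"
proof -
  define b where "b = mmul M a (mzero M)"
  have bb: "b = madd M b b" using distrib[of a "mzero M" "mzero M"] add_zero[of "mzero M"]
    by (simp add: b_def)
  have "mzero M = madd M b (mneg M b)" by (simp add: add_neg)
  also have "\<dots> = madd M (madd M b b) (mneg M b)" using bb by simp
  also have "\<dots> = b" by (simp add: add_assoc add_neg add_zero)
  finally show ?thesis by (simp add: b_def)
qed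

definition e where "e a = mmul M a (minv M a)"

lemma e_zero: "e (mzero M) = mzero M"
  unfolding e_def by (metis mul_comm mul_zero)

lemma e_nz: "a \<noteq> mzero M \<Longrightarrow> e a = mone M"
  unfolding e_def using mul_inv[of a] mul_one[of a] cancel by metis

lemma e_cases: "e a = mzero M \<or> e a = mone M"
  by (cases "a = mzero M") (auto simp: e_zero e_nz)

lemma e_one: "e (mone M) = mone M"
  using e_nz zero_ne_one by metis

lemma zero_add: "madd M (mzero M) x = x" by (metis add_comm add_zero)

lemma sub_eq: "madd M x (mneg M y) = mzero M \<Longrightarrow> x = y"
proof -
  assume h: "madd M x (mneg M y) = mzero M"
  have "x = madd M x (madd M (mneg M y) y)" by (metis add_comm add_neg add_zero)
  also have "\<dots> = y" by (metis add_assoc h zero_add)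
  finally show ?thesis .
qed

lemma S_nz:
  assumes two: "madd M (mone M) (mone M) \<noteq> mzero M" and a: "a \<noteq> mzero M"
  shows "e (madd M (e b) (e a)) = mone M"
proof -
  have "madd M (e b) (e a) \<noteq> mzero M"
    using e_cases[of b] e_nz[OF a] two zero_add zero_ne_one by metis
  thus ?thesis by (rule e_nz)
qed

lemma S1:
  assumes two: "madd M (mone M) (mone M) \<noteq> mzero M" and h: "a = mzero M \<longrightarrow> b = c"
  shows "e (madd M (e b) (e a)) = e (madd M (e c) (e a))"
proof (cases "a = mzero M")
  case True thus ?thesis using h by simp
next
  case False thus ?thesis using S_nz[OF two] by simp
qed

lemma S2:
  assumes two: "madd M (mone M) (mone M) \<noteq> mzero M" and h: "a = mzero M \<longrightarrow> b = mzero M"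
  shows "e (madd M (e b) (e a)) = e a"
proof (cases "a = mzero M")
  case True thus ?thesis using h by (simp add: e_zero add_zero)
next
  case False thus ?thesis using S_nz[OF two] e_nz by simp
qed

lemma collapse:
  assumes two: "madd M (mone M) (mone M) = mzero M"
  shows "ctc M s t"
proof -
  have ed: "ctc M Eps Delta"
  proof -
    have "ctc M Eps (Gam DZero)" by (rule ctc.sym[OF ctc.T7])
    also have "ctc M (Gam DZero) (Gam (DAdd (DDiv DOne DOne) (DDiv DOne DOne)))"
      by (rule ctc.DE) (simp add: dvalid_def DDiv_def e_one[unfolded e_def] two)
    also have "ctc M \<dots> (Oplus (Gam DOne) (Gam DOne))" by (rule ctc.sym[OF ctc.T9])
    also have "ctc M \<dots> (Oplus Delta Delta)" by (rule ctc.cong[OF ctc.T8 ctc.T8])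
    also have "ctc M \<dots> Delta" by (rule ctc.T4)
    finally show ?thesis .
  qed
  have d: "ctc M x Delta" for x :: "'a tterm"
  proof -
    have "ctc M x (Oplus x Eps)" by (rule ctc.sym[OF ctc.T3])
    also have "ctc M \<dots> (Oplus x Delta)" by (rule ctc.cong[OF ctc.refl ed])
    also have "ctc M \<dots> Delta" by (rule ctc.T4)
    finally show ?thesis .
  qed
  show ?thesis using d[of s] ctc.sym[OF d[of t]] by (rule ctc.trans)
qed

end

lemma subst_eval: "deval M \<rho> (dsubst u p r) = deval M (\<rho>(u := deval M \<rho> p)) r"
  by (induction r) auto

lemma (in ncm) ent_valid:
  assumes "dvalid M x y"
  shows "ctc M (Ent a x) (Ent a y)"
proof -
  have g: "ctc M (Gam (DSub x y)) Eps"
    by (rule ctc.trans[OF ctc.DE ctc.T7]) (use assms in \<open>simp add: dvalid_def DSub_def add_neg\<close>)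
  have "ctc M (Ent a x) (Oplus (Ent a x) Eps)" by (rule ctc.sym[OF ctc.T3])
  also have "ctc M \<dots> (Oplus (Ent a x) (Gam (DSub x y)))" by (rule ctc.cong[OF ctc.refl ctc.sym[OF g]])
  also have "ctc M \<dots> (Oplus (Gam (DSub x y)) (Ent a x))" by (rule ctc.T1)
  also have "ctc M \<dots> (Oplus (Gam (DSub x y)) (Ent a y))" by (rule ctc.T10)
  also have "ctc M \<dots> (Oplus (Ent a y) (Gam (DSub x y)))" by (rule ctc.T1)
  also have "ctc M \<dots> (Oplus (Ent a y) Eps)" by (rule ctc.cong[OF ctc.refl g])
  also have "ctc M \<dots> (Ent a y)" by (rule ctc.T3)
  finally show ?thesis .
qed

lemma (in ncm) part1:
  assumes "dvalid M p q"
  shows "ctc M (tsubst u p t) (tsubst u q t)"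
proof (induction t)
  case (Ent a r)
  show ?case by simp (rule ent_valid, use assms in \<open>simp add: dvalid_def subst_eval\<close>)
next
  case (Gam r)
  show ?case by simp (rule ctc.DE, use assms in \<open>simp add: dvalid_def subst_eval\<close>)
next
  case (Oplus s t)
  thus ?case by (simp add: ctc.cong)
qed (auto intro: ctc.refl)

lemma (in ncm) subst_same:
  assumes "madd M (\<rho> u) (mneg M (deval M \<rho> p)) = mzero M"
  shows "deval M \<rho> (dsubst u p r) = deval M \<rho> r"
proof -
  have "\<rho> u = deval M \<rho> p" using sub_eq[OF assms] .
  hence "\<rho>(u := deval M \<rho> p) = \<rho>" by auto
  thus ?thesis by (simp add: subst_eval)
qed

lemma (in ncm) part2:
  assumes two: "madd M (mone M) (mone M) \<noteq> mzero M"
  shows "ctc M (Oplus t (Gam (DSub (DVar u) p))) (Oplus (tsubst u p t) (Gam (DSub (DVar u) p)))"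
proof (induction t)
  case (Ent a r)
  let ?G = "Gam (DSub (DVar u) p)"
  let ?z = "DSub r (dsubst u p r)"
  have GG: "ctc M ?G (Oplus ?G (Gam ?z))"
  proof -
    have "ctc M ?G (Gam (DDiv (DSub (DVar u) p) (DSub (DVar u) p)))" by (rule ctc.T6)
    also have "ctc M \<dots> (Gam (DDiv (DAdd (DDiv ?z ?z) (DDiv (DSub (DVar u) p) (DSub (DVar u) p)))
                    (DAdd (DDiv ?z ?z) (DDiv (DSub (DVar u) p) (DSub (DVar u) p)))))"
      apply (rule ctc.DE)
      apply (simp add: dvalid_def DDiv_def DSub_def)
      apply (rule allI)
      subgoal for \<rho>
        using S2[OF two, unfolded e_def, of "madd M (\<rho> u) (mneg M (deval M \<rho> p))"
           "madd M (deval M \<rho> r) (mneg M (deval M \<rho> (dsubst u p r)))"]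
        by (simp add: subst_same add_neg)
      done
    also have "ctc M \<dots> (Gam (DAdd (DDiv ?z ?z) (DDiv (DSub (DVar u) p) (DSub (DVar u) p))))"
      by (rule ctc.sym[OF ctc.T6])
    also have "ctc M \<dots> (Oplus (Gam ?z) ?G)" by (rule ctc.sym[OF ctc.T9])
    also have "ctc M \<dots> (Oplus ?G (Gam ?z))" by (rule ctc.T1)
    finally show ?thesis .
  qed
  have "ctc M (Oplus (Ent a r) ?G) (Oplus (Ent a r) (Oplus ?G (Gam ?z)))"
    by (rule ctc.cong[OF ctc.refl GG])
  also have "ctc M \<dots> (Oplus (Oplus ?G (Gam ?z)) (Ent a r))" by (rule ctc.T1)
  also have "ctc M \<dots> (Oplus ?G (Oplus (Gam ?z) (Ent a r)))" by (rule ctc.T2)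
  also have "ctc M \<dots> (Oplus ?G (Oplus (Gam ?z) (Ent a (dsubst u p r))))"
    by (rule ctc.cong[OF ctc.refl ctc.T10])
  also have "ctc M \<dots> (Oplus (Oplus ?G (Gam ?z)) (Ent a (dsubst u p r)))" by (rule ctc.sym[OF ctc.T2])
  also have "ctc M \<dots> (Oplus (Ent a (dsubst u p r)) (Oplus ?G (Gam ?z)))" by (rule ctc.T1)
  also have "ctc M \<dots> (Oplus (Ent a (dsubst u p r)) ?G)" by (rule ctc.cong[OF ctc.refl ctc.sym[OF GG]])
  finally show ?case by simp
next
  case (Gam r)
  let ?x = "DSub (DVar u) p"
  let ?r = "dsubst u p r"
  have "ctc M (Oplus (Gam r) (Gam ?x)) (Gam (DAdd (DDiv r r) (DDiv ?x ?x)))" by (rule ctc.T9)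
  also have "ctc M \<dots> (Gam (DDiv (DAdd (DDiv r r) (DDiv ?x ?x)) (DAdd (DDiv r r) (DDiv ?x ?x))))"
    by (rule ctc.T6)
  also have "ctc M \<dots> (Gam (DDiv (DAdd (DDiv ?r ?r) (DDiv ?x ?x)) (DAdd (DDiv ?r ?r) (DDiv ?x ?x))))"
      apply (rule ctc.DE)
      apply (simp add: dvalid_def DDiv_def DSub_def)
      apply (rule allI)
      subgoal for \<rho>
        using S1[OF two, unfolded e_def, of "madd M (\<rho> u) (mneg M (deval M \<rho> p))"
           "deval M \<rho> r" "deval M \<rho> (dsubst u p r)"]
        by (simp add: subst_same)
      done
  also have "ctc M \<dots> (Gam (DAdd (DDiv ?r ?r) (DDiv ?x ?x)))" by (rule ctc.sym[OF ctc.T6])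
  also have "ctc M \<dots> (Oplus (Gam ?r) (Gam ?x))" by (rule ctc.sym[OF ctc.T9])
  finally show ?case by simp
next
  case (Oplus s t)
  let ?G = "Gam (DSub (DVar u) p)"
  let ?s = "tsubst u p s" let ?t = "tsubst u p t"
  have "ctc M (Oplus (Oplus s t) ?G) (Oplus s (Oplus t ?G))" by (rule ctc.T2)
  also have "ctc M \<dots> (Oplus s (Oplus ?t ?G))" by (rule ctc.cong[OF ctc.refl Oplus.IH(2)])
  also have "ctc M \<dots> (Oplus (Oplus s ?t) ?G)" by (rule ctc.sym[OF ctc.T2])
  also have "ctc M \<dots> (Oplus (Oplus ?t s) ?G)" by (rule ctc.cong[OF ctc.T1 ctc.refl])
  also have "ctc M \<dots> (Oplus ?t (Oplus s ?G))" by (rule ctc.T2)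
  also have "ctc M \<dots> (Oplus ?t (Oplus ?s ?G))" by (rule ctc.cong[OF ctc.refl Oplus.IH(1)])
  also have "ctc M \<dots> (Oplus (Oplus ?t ?s) ?G)" by (rule ctc.sym[OF ctc.T2])
  also have "ctc M \<dots> (Oplus (Oplus ?s ?t) ?G)" by (rule ctc.cong[OF ctc.T1 ctc.refl])
  finally show ?case by simp
qed (auto intro: ctc.refl)

theorem mainTheorem4:
  fixes M :: "'d meadow_ops"
  assumes "nt_cancellation_meadow M"
  shows "(\<forall>(p::dterm) q u (t::'a tterm). dvalid M p q \<longrightarrow> ctc M (tsubst u p t) (tsubst u q t))
       \<and> (\<forall>(t::'a tterm) u p. ctc M (Oplus t (Gam (DSub (DVar u) p)))
                                     (Oplus (tsubst u p t) (Gam (DSub (DVar u) p))))"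
proof -
  interpret ncm M by (rule ncm.intro[OF assms])
  show ?thesis
  proof (cases "madd M (mone M) (mone M) = mzero M")
    case True thus ?thesis using collapse by blast
  next
    case False thus ?thesis using part1 part2 by blast
  qed
qed

end
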